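(* Let $X$ and $\Theta$ be compact metric spaces, $\tau:\Theta\times X\to X$, $(\theta,x)\mapsto\tau_\theta(x)$, continuous, $\Omega=X\times\Theta$, and $\mathcal{H}$ the set of holonomic Borel probability measures on $\Omega$, i.e. those $\hat\nu$ with $\int_\Omega [f(\tau_\theta(x))-f(x)]\,d\hat\nu(x,\theta)=0$ for all $f\in C(X,\mathbb{R})$; for $\hat\nu\in\mathcal{H}$ write $\nu=\pi_*\hat\nu$ for its marginal on $X$ ($\pi:\Omega\to X$ the projection). Let $\mu$ be a Borel probability on $\Theta$, let $\psi:X\to\mathbb{R}$ be a positive continuous function, let $dq_x(\theta)=\psi(\tau_\theta(x))\,d\mu(\theta)$, and $B_q(g)(x)=\int_\Theta g(\tau_\theta(x))\,dq_x(\theta)$, $B_\mu(g)(x)=\int_\Theta g(\tau_\theta(x))\,d\mu(\theta)$. Define the topological pressure \[ P(\psi)=\sup_{\hat\nu\in\mathcal{H}}\ \inf_{g\in C(X,\mathbb{R}),\,g>0}\int_X\ln\frac{B_q(g)}{g}\,d\nu, \] and the variational entropy $h_v(\hat\nu)=\inf_{g\in C(X,\mathbb{R}),\,g>0}\int_X\ln\frac{B_\mu(g)}{g}\,d\nu$. Then \[ P(\psi)=\sup_{\hat\nu\in\mathcal{H}}\Big\{h_v(\hat\nu)+\int_X\log\psi\,d\nu\Big\}. \] *)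

theory Defs
  imports "HOL-Probability.Probability"
begin

definition holonomic :: "('t \<Rightarrow> 'x \<Rightarrow> 'x) \<Rightarrow> ('x::metric_space \<times> 't::metric_space) measure \<Rightarrow> bool" where
  "holonomic tau N \<longleftrightarrow> prob_space N \<and> sets N = sets borel \<and>
     (\<forall>f::'x \<Rightarrow> real. continuous_on UNIV f \<longrightarrow>
        (\<integral>w. f (tau (snd w) (fst w)) - f (fst w) \<partial>N) = 0)"

definition holonomic_set :: "('t \<Rightarrow> 'x \<Rightarrow> 'x) \<Rightarrow> ('x::metric_space \<times> 't::metric_space) measure set" where
  "holonomic_set tau = {N. holonomic tau N}"

definition marginal :: "('x::metric_space \<times> 't::metric_space) measure \<Rightarrow> 'x measure" where
  "marginal N = distr N borel fst"

definition B_mu :: "'t measure \<Rightarrow> ('t \<Rightarrow> 'x \<Rightarrow> 'x) \<Rightarrow> ('x \<Rightarrow> real) \<Rightarrow> 'x \<Rightarrow> real" where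
  "B_mu mu tau g x = (\<integral>\<theta>. g (tau \<theta> x) \<partial>mu)"

text \<open>d q_x(theta) = psi(tau_theta x) d mu(theta).\<close>
definition B_q :: "'t measure \<Rightarrow> ('t \<Rightarrow> 'x \<Rightarrow> 'x) \<Rightarrow> ('x \<Rightarrow> real) \<Rightarrow> ('x \<Rightarrow> real) \<Rightarrow> 'x \<Rightarrow> real" where
  "B_q mu tau psi g x = (\<integral>\<theta>. g (tau \<theta> x) * psi (tau \<theta> x) \<partial>mu)"

definition pos_cont :: "('x::topological_space \<Rightarrow> real) set" where
  "pos_cont = {g. continuous_on UNIV g \<and> (\<forall>x. g x > 0)}"

definition pressure :: "'t::metric_space measure \<Rightarrow> ('t \<Rightarrow> 'x \<Rightarrow> 'x) \<Rightarrow> ('x::metric_space \<Rightarrow> real) \<Rightarrow> ereal" where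
  "pressure mu tau psi =
     (SUP N \<in> holonomic_set tau. INF g \<in> pos_cont.
        ereal (\<integral>x. ln (B_q mu tau psi g x / g x) \<partial>marginal N))"

definition var_entropy :: "'t::metric_space measure \<Rightarrow> ('t \<Rightarrow> 'x \<Rightarrow> 'x) \<Rightarrow> ('x::metric_space \<times> 't) measure \<Rightarrow> ereal" where
  "var_entropy mu tau N =
     (INF g \<in> pos_cont. ereal (\<integral>x. ln (B_mu mu tau g x / g x) \<partial>marginal N))"

end

theory Submission imports Defs begin

lemma INF_add_real:
  fixes f :: "'a \<Rightarrow> ereal"
  shows "(INF i\<in>I. f i + ereal c) = (INF i\<in>I. f i) + ereal c"
proof (rule antisym)
  show "(INF i\<in>I. f i) + ereal c \<le> (INF i\<in>I. f i + ereal c)"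
    by (rule INF_greatest) (intro add_right_mono INF_lower)
next
  have "(INF i\<in>I. f i + ereal c) + ereal (-c) \<le> (INF i\<in>I. f i)"
  proof (rule INF_greatest)
    fix i assume "i \<in> I"
    then have "(INF i\<in>I. f i + ereal c) + ereal (-c) \<le> (f i + ereal c) + ereal (-c)"
      by (intro add_right_mono INF_lower)
    also have "\<dots> = f i" by (cases "f i") auto
    finally show "(INF i\<in>I. f i + ereal c) + ereal (-c) \<le> f i" .
  qed
  then have "((INF i\<in>I. f i + ereal c) + ereal (-c)) + ereal c \<le> (INF i\<in>I. f i) + ereal c"
    by (rule add_right_mono)
  also have "((INF i\<in>I. f i + ereal c) + ereal (-c)) + ereal c = (INF i\<in>I. f i + ereal c)"
    by (cases "(INF i\<in>I. f i + ereal c)") auto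
  finally show "(INF i\<in>I. f i + ereal c) \<le> (INF i\<in>I. f i) + ereal c" .
qed

lemma cont_integrable:
  fixes f :: "'a::metric_space \<Rightarrow> real"
  assumes "compact (UNIV::'a set)" "continuous_on UNIV f" "finite_measure M" "sets M = sets borel"
  shows "integrable M f"
proof -
  have "bounded (range f)" using compact_continuous_image[OF assms(2,1)] compact_imp_bounded by blast
  then obtain B where B: "\<And>x. norm (f x) \<le> B" by (auto simp: bounded_iff)
  have m: "f \<in> borel_measurable M"
    using borel_measurable_continuous_onI[OF assms(2)] measurable_cong_sets[OF assms(4) refl] by blast
  show ?thesis by (rule finite_measure.integrable_const_bound[OF assms(3) _ m, of B]) (use B in auto)
qed

lemma cont_pos_lower:
  fixes f :: "'a::metric_space \<Rightarrow> real"
  assumes "compact (UNIV::'a set)" "continuous_on UNIV f" "\<forall>x. f x > 0"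
  shows "\<exists>a>0. \<forall>x. a \<le> f x"
proof -
  obtain x0 :: 'a where True by auto
  obtain y where "\<forall>x. f y \<le> f x"
    using compact_attains_inf[OF compact_continuous_image[OF assms(2,1)]] by auto
  then show ?thesis using assms(3) by blast
qed

lemma B_mu_cont:
  fixes tau :: "'t::metric_space \<Rightarrow> 'x::metric_space \<Rightarrow> 'x" and h :: "'x \<Rightarrow> real"
  assumes "compact (UNIV :: 'x set)" and "compact (UNIV :: 't set)"
    and tc: "continuous_on UNIV (\<lambda>(\<theta>, x). tau \<theta> x)"
    and "prob_space mu" and "sets mu = sets borel" and hc: "continuous_on UNIV h"
  shows "continuous_on UNIV (B_mu mu tau h)"
proof -
  define F where "F = (\<lambda>(\<theta>::'t, x::'x). h (tau \<theta> x))"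
  have Fc: "continuous_on UNIV F"
    unfolding F_def using continuous_on_compose[OF tc, of h] hc
    by (simp add: comp_def case_prod_unfold continuous_on_subset)
  have cUNIV: "compact (UNIV :: ('t \<times> 'x) set)"
    using compact_Times[OF assms(2,1)] by simp
  have uc: "uniformly_continuous_on UNIV F" by (rule compact_uniformly_continuous[OF Fc cUNIV])
  have int: "integrable mu (\<lambda>\<theta>. F (\<theta>, x))" for x
  proof -
    have "continuous_on UNIV (\<lambda>\<theta>. F (\<theta>, x))"
      by (rule continuous_on_compose2[OF Fc]) (auto intro!: continuous_intros)
    then show ?thesis
      using cont_integrable[OF assms(2) _ _ assms(5)] assms(4) by (auto simp: prob_space_def)
  qed
  have Beq: "B_mu mu tau h x = (\<integral>\<theta>. F (\<theta>, x) \<partial>mu)" for x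
    by (simp add: B_mu_def F_def)
  show ?thesis
    unfolding continuous_on_iff
  proof (intro ballI allI impI)
    fix x :: 'x and e :: real assume e: "e > 0"
    obtain d where d: "d > 0" "\<And>p p'. dist p' p < d \<Longrightarrow> dist (F p') (F p) < e/2"
      using uc e unfolding uniformly_continuous_on_def by (meson half_gt_zero UNIV_I)
    show "\<exists>d>0. \<forall>x'\<in>UNIV. dist x' x < d \<longrightarrow> dist (B_mu mu tau h x') (B_mu mu tau h x) < e"
    proof (intro exI[of _ d] conjI ballI impI)
      fix x' :: 'x assume "dist x' x < d"
      then have b: "dist (F (\<theta>, x')) (F (\<theta>, x)) < e/2" for \<theta>
        using d(2)[of "(\<theta>,x)" "(\<theta>,x')"] by (simp add: dist_Pair_Pair dist_commute)
      interpret prob_space mu by fact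
      have ic: "integrable mu (\<lambda>\<theta>. F (\<theta>, y) + e/2)" for y
        by (intro Bochner_Integration.integrable_add int integrable_const)
      have b1: "F (\<theta>, x') \<le> F (\<theta>, x) + e/2" "F (\<theta>, x) \<le> F (\<theta>, x') + e/2" for \<theta>
        using b[of \<theta>] unfolding dist_real_def by arith+
      have i1: "(\<integral>\<theta>. F (\<theta>, x') \<partial>mu) \<le> (\<integral>\<theta>. F (\<theta>, x) + e/2 \<partial>mu)"
        using b1 by (intro integral_mono int ic)
    have i2: "(\<integral>\<theta>. F (\<theta>, x) \<partial>mu) \<le> (\<integral>\<theta>. F (\<theta>, x') + e/2 \<partial>mu)"
        using b1 by (intro integral_mono int ic)
      have p: "prob_space mu" by fact
      have "(\<integral>\<theta>. F (\<theta>, x) + e/2 \<partial>mu) = (\<integral>\<theta>. F (\<theta>, x) \<partial>mu) + e/2" for x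
        using int[of x] prob_space.prob_space[OF p] by (simp add: integral_add)
      then show "dist (B_mu mu tau h x') (B_mu mu tau h x) < e"
        using i1 i2 e unfolding Beq dist_real_def by auto
    qed (use d in auto)
  qed
qed


lemma inner_cont:
  fixes tau :: "'t::metric_space \<Rightarrow> 'x::metric_space \<Rightarrow> 'x" and h :: "'x \<Rightarrow> real"
  assumes tc: "continuous_on UNIV (\<lambda>(\<theta>, x). tau \<theta> x)" and hc: "continuous_on UNIV h"
  shows "continuous_on UNIV (\<lambda>\<theta>. h (tau \<theta> x))"
proof -
  have "continuous_on UNIV (\<lambda>\<theta>. (\<lambda>(\<theta>, x). tau \<theta> x) (\<theta>, x))"
    by (rule continuous_on_compose2[OF tc]) (auto intro!: continuous_intros)
  then show ?thesis using continuous_on_compose2[OF hc] by fastforce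
qed

lemma B_mu_pos:
  fixes tau :: "'t::metric_space \<Rightarrow> 'x::metric_space \<Rightarrow> 'x" and h :: "'x \<Rightarrow> real"
  assumes "compact (UNIV :: 'x set)" and "compact (UNIV :: 't set)"
    and tc: "continuous_on UNIV (\<lambda>(\<theta>, x). tau \<theta> x)"
    and p: "prob_space mu" and "sets mu = sets borel" and h: "h \<in> pos_cont"
  shows "B_mu mu tau h x > 0"
proof -
  interpret prob_space mu by fact
  have hc: "continuous_on UNIV h" "\<forall>x. h x > 0" using h by (auto simp: pos_cont_def)
  obtain a where a: "a > 0" "\<And>y. a \<le> h y" using cont_pos_lower[OF assms(1) hc] by blast
  have int: "integrable mu (\<lambda>\<theta>. h (tau \<theta> x))"
    using cont_integrable[OF assms(2) inner_cont[OF tc hc(1)] _ assms(5)] finite_measure_axioms by blast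
  have "(\<integral>\<theta>. a \<partial>mu) \<le> (\<integral>\<theta>. h (tau \<theta> x) \<partial>mu)"
    using a by (intro integral_mono int) auto
  then show ?thesis using a by (simp add: B_mu_def prob_space)
qed

lemma INF_shift:
  fixes psi :: "'x::metric_space \<Rightarrow> real" and G :: "('x \<Rightarrow> real) \<Rightarrow> ereal"
  assumes "continuous_on UNIV psi" and "\<forall>x. psi x > 0"
  shows "(INF g\<in>pos_cont. G (\<lambda>x. g x * psi x)) = (INF h\<in>pos_cont. G h)"
proof -
  have nzp: "psi x \<noteq> 0" for x using assms(2)[rule_format, of x] by auto
  have "(\<lambda>g x. g x * psi x) ` pos_cont = pos_cont"
  proof
    show "(\<lambda>g x. g x * psi x) ` pos_cont \<subseteq> pos_cont"
    proof
      fix h assume "h \<in> (\<lambda>g x. g x * psi x) ` pos_cont"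
      then obtain g where g: "g \<in> pos_cont" "h = (\<lambda>x. g x * psi x)" by blast
      have "continuous_on UNIV (\<lambda>x. g x * psi x)"
        using g(1) by (intro continuous_on_mult assms(1)) (simp add: pos_cont_def)
      moreover have "g x * psi x > 0" for x
        using g(1) assms(2)[rule_format, of x] by (simp add: pos_cont_def)
      ultimately show "h \<in> pos_cont" using g(2) by (simp add: pos_cont_def)
    qed
    show "pos_cont \<subseteq> (\<lambda>g x. g x * psi x) ` pos_cont"
    proof
      fix h :: "'x \<Rightarrow> real" assume h: "h \<in> pos_cont"
      have "continuous_on UNIV (\<lambda>x. h x / psi x)"
        using h by (intro continuous_on_divide assms(1)) (simp_all add: pos_cont_def nzp)
      moreover have "h x / psi x > 0" for x
        using h assms(2)[rule_format, of x] by (simp add: pos_cont_def)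
      ultimately have m1: "(\<lambda>x. h x / psi x) \<in> pos_cont" by (simp add: pos_cont_def)
      have m2: "h = (\<lambda>x. (h x / psi x) * psi x)" by (simp add: nzp)
      show "h \<in> (\<lambda>g x. g x * psi x) ` pos_cont" by (rule image_eqI[where x="\<lambda>x. h x / psi x" and f="\<lambda>g x. g x * psi x", OF m2 m1])
    qed
  qed
  from arg_cong[OF this, of "\<lambda>S. Inf (G ` S)"] show ?thesis unfolding image_image .
qed

theorem mainTheorem6:
  fixes tau :: "'t::metric_space \<Rightarrow> 'x::metric_space \<Rightarrow> 'x"
    and mu :: "'t measure" and psi :: "'x \<Rightarrow> real"
  assumes "compact (UNIV :: 'x set)" and "compact (UNIV :: 't set)"
    and "continuous_on UNIV (\<lambda>(\<theta>, x). tau \<theta> x)"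
    and "prob_space mu" and "sets mu = sets borel"
    and "continuous_on UNIV psi" and "\<forall>x. psi x > 0"
  shows "pressure mu tau psi =
    (SUP N \<in> holonomic_set tau. var_entropy mu tau N + ereal (\<integral>x. ln (psi x) \<partial>marginal N))"
  unfolding pressure_def
proof (rule SUP_cong[OF refl])
  fix N assume "N \<in> holonomic_set tau"
  then have hol: "prob_space N" "sets N = sets borel" by (auto simp: holonomic_set_def holonomic_def)
  have mf: "fst \<in> measurable N (borel :: 'x measure)"
    using borel_measurable_continuous_onI[OF continuous_on_fst[OF continuous_on_id]]
      measurable_cong_sets[OF hol(2) refl] by auto
  have pm: "prob_space (marginal N)" unfolding marginal_def
    by (rule prob_space.prob_space_distr[OF hol(1) mf])
  then have fm: "finite_measure (marginal N)" by (simp add: prob_space_def)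
  have sm: "sets (marginal N) = sets borel" by (simp add: marginal_def)
  define c where "c = (\<integral>x. ln (psi x) \<partial>marginal N)"
  define E where "E = (\<lambda>h. ereal (\<integral>x. ln (B_mu mu tau h x / h x) \<partial>marginal N))"
  have key: "ereal (\<integral>x. ln (B_q mu tau psi g x / g x) \<partial>marginal N) = E (\<lambda>x. g x * psi x) + ereal c"
    if g: "g \<in> pos_cont" for g
  proof -
    define h where "h = (\<lambda>x. g x * psi x)"
    have gc: "continuous_on UNIV g" "\<forall>x. g x > 0" using g by (auto simp: pos_cont_def)
    have h: "h \<in> pos_cont" using gc assms(6,7) by (auto simp: pos_cont_def h_def intro!: continuous_intros)
    have hc: "continuous_on UNIV h" "\<forall>x. h x > 0" using h by (auto simp: pos_cont_def)
    have Bq: "B_q mu tau psi g = B_mu mu tau h" by (auto simp: B_q_def B_mu_def h_def)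
    have Bpos: "B_mu mu tau h x > 0" for x by (rule B_mu_pos[OF assms(1-5) h])
    have Bc: "continuous_on UNIV (B_mu mu tau h)" by (rule B_mu_cont[OF assms(1-5) hc(1)])
    have pt: "ln (B_q mu tau psi g x / g x) = ln (B_mu mu tau h x / h x) + ln (psi x)" for x
    proof -
      have p: "psi x > 0" "g x > 0" "B_mu mu tau h x > 0" using Bpos[of x] gc(2) assms(7) by auto
      have "ln (B_mu mu tau h x / h x) + ln (psi x) = ln (B_mu mu tau h x / h x * psi x)"
        using p by (intro ln_mult_pos[symmetric]) (auto simp: h_def)
      also have "B_mu mu tau h x / h x * psi x = B_mu mu tau h x / g x"
        using p by (simp add: h_def field_simps)
      finally show ?thesis by (simp add: Bq)
    qed
    have nz: "h x \<noteq> 0" "B_mu mu tau h x \<noteq> 0" for x using hc(2)[rule_format, of x] Bpos[of x] by auto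
    have "continuous_on UNIV (\<lambda>x. B_mu mu tau h x / h x)"
      by (rule continuous_on_divide[OF Bc hc(1)]) (simp add: nz)
    then have "continuous_on UNIV (\<lambda>x. ln (B_mu mu tau h x / h x))"
      by (rule continuous_on_ln) (simp add: nz)
    then have i1: "integrable (marginal N) (\<lambda>x. ln (B_mu mu tau h x / h x))"
      by (rule cont_integrable[OF assms(1) _ fm sm])
    have nzp: "psi x \<noteq> 0" for x using assms(7)[rule_format, of x] by auto
    have "continuous_on UNIV (\<lambda>x. ln (psi x))"
      by (rule continuous_on_ln[OF assms(6)]) (simp add: nzp)
    then have i2: "integrable (marginal N) (\<lambda>x. ln (psi x))"
      by (rule cont_integrable[OF assms(1) _ fm sm])
    show ?thesis unfolding pt E_def c_def h_def[symmetric]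
      by (subst Bochner_Integration.integral_add[OF i1 i2]) simp
  qed
  have "(INF g\<in>pos_cont. ereal (\<integral>x. ln (B_q mu tau psi g x / g x) \<partial>marginal N))
      = (INF g\<in>pos_cont. E (\<lambda>x. g x * psi x) + ereal c)"
    using key by (intro INF_cong) auto
  also have "\<dots> = (INF g\<in>pos_cont. E (\<lambda>x. g x * psi x)) + ereal c" by (rule INF_add_real)
  also have "\<dots> = (INF h\<in>pos_cont. E h) + ereal c" by (rule arg_cong[where f="\<lambda>a. a + ereal c"], rule INF_shift[OF assms(6,7)])
  finally show "(INF g\<in>pos_cont. ereal (\<integral>x. ln (B_q mu tau psi g x / g x) \<partial>marginal N))
      = var_entropy mu tau N + ereal (\<integral>x. ln (psi x) \<partial>marginal N)"
    unfolding var_entropy_def E_def c_def by assumption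
qed

end
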